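(* Let $K:\mathbb{Z}_{>0}\to\mathbb{Z}$ be the number of ordered factorizations, defined by $$K(n) = \varepsilon(n) + \sum_{d\mid n,\ d<n} K(d)\qquad (n\ge1),$$ and for a real (or complex) number $x$ let $\kappa_x$ be the recursive divisor function defined by $$\kappa_x(n) = n^x + \sum_{d \mid n,\ d<n} \kappa_x(d)\qquad (n\ge 1).$$ Then $\kappa_0 = \mathbf{1} * K$, i.e. $\kappa_0(n)=\sum_{d\mid n} K(d)$ for all $n\ge1$. Furthermore: 1. $K = (\varepsilon + \mathbf{1} * K)/2$; 2. $K = \dfrac{\varepsilon}{2} + \dfrac{\mathbf{1}}{2^2} + \dfrac{\mathbf{1}*\mathbf{1}}{2^3} + \cdots$, i.e. $K(n)=\sum_{k\ge0} 2^{-(k+1)}\mathbf{1}^{*k}(n)$ for every $n$, where $\mathbf{1}^{*k}$ is the $k$-fold Dirichlet convolution power of $\mathbf{1}$ (with $\mathbf{1}^{*0}=\varepsilon$); 3. $\kappa_x = \mathrm{id}_x * K$ for every $x$; 4. $K^{-1} = 2\varepsilon - \mathbf{1}$.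
   Context: $K(n)$ equals the number of ways to write $n$ as an ordered product of integers greater than $1$ (with $K(1)=1$). Arithmetic functions are functions $\mathbb{Z}_{>0}\to\mathbb{C}$, added and scaled pointwise. $f*g$ denotes Dirichlet convolution, $(f*g)(n)=\sum_{d\mid n} f(d)g(n/d)$, and $f^{-1}$ denotes the Dirichlet inverse. Notation: $\varepsilon(n)=1$ if $n=1$ and $0$ otherwise; $\mathbf{1}(n)=1$ for all $n$; $\mathrm{id}_x(n)=n^x$; $\kappa_0$ is $\kappa_x$ with $x=0$. *)

theory Defs
  imports "HOL-Analysis.Complex_Transcendental"
begin

text \<open>Arithmetic functions are modelled as functions nat \<Rightarrow> complex; only their
  values at positive arguments are meaningful (value at 0 is irrelevant).\<close>

definition dconv :: "(nat \<Rightarrow> complex) \<Rightarrow> (nat \<Rightarrow> complex) \<Rightarrow> nat \<Rightarrow> complex"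
  (infixl "\<star>" 70) where
  "dconv f g n = (\<Sum>d \<in> {d. d dvd n}. f d * g (n div d))"

definition eps :: "nat \<Rightarrow> complex" where
  "eps n = (if n = 1 then 1 else 0)"

definition one :: "nat \<Rightarrow> complex" where
  "one n = 1"

definition id_pow :: "complex \<Rightarrow> nat \<Rightarrow> complex" where
  "id_pow x n = (of_nat n :: complex) powr x"

definition is_dinverse :: "(nat \<Rightarrow> complex) \<Rightarrow> (nat \<Rightarrow> complex) \<Rightarrow> bool" where
  "is_dinverse f g \<longleftrightarrow> (\<forall>n>0. (f \<star> g) n = eps n)"

primrec dconv_pow :: "(nat \<Rightarrow> complex) \<Rightarrow> nat \<Rightarrow> nat \<Rightarrow> complex" where
  "dconv_pow f 0 = eps"
| "dconv_pow f (Suc k) = f \<star> dconv_pow f k"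

function K :: "nat \<Rightarrow> int" where
  "K n = (if n = 0 then 0 else (if n = 1 then 1 else 0) + (\<Sum>d \<in> {d. d dvd n \<and> d < n}. K d))"
  by auto
termination
  by (relation "measure id") auto

function kappa :: "complex \<Rightarrow> nat \<Rightarrow> complex" where
  "kappa x n = (if n = 0 then 0 else (of_nat n :: complex) powr x + (\<Sum>d \<in> {d. d dvd n \<and> d < n}. kappa x d))"
  by auto
termination
  by (relation "measure snd") auto

definition Kc :: "nat \<Rightarrow> complex" where
  "Kc n = of_int (K n)"

end

theory Submission
  imports Defs
begin

lemma dvd_pos: "d dvd (n::nat) \<Longrightarrow> n > 0 \<Longrightarrow> d > 0 \<and> n div d > 0"
  by (metis dvd_div_eq_0_iff gr0I dvd_0_left_iff)

lemma fin_div: "n > 0 \<Longrightarrow> finite {d. d dvd (n::nat)}"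
  by (simp add: finite_divisors_nat)

lemma div_self_facts:
  assumes "a dvd (n::nat)" "n > 0"
  shows "n div (n div a) = a" "n div a dvd n"
proof -
  obtain k where k: "n = a * k" using assms by blast
  have "a > 0" "k > 0" using assms k by auto
  then show "n div (n div a) = a" "n div a dvd n" using k by auto
qed

lemma dconv_comm:
  assumes "n > 0" shows "(f \<star> g) n = (g \<star> f) n"
  unfolding dconv_def
  by (rule sum.reindex_bij_witness[where i="\<lambda>d. n div d" and j="\<lambda>d. n div d"])
    (simp_all add: div_self_facts assms)

lemma dconv_cong_left:
  assumes "n > 0" "\<And>m. m > 0 \<Longrightarrow> f m = f' m"
  shows "(f \<star> g) n = (f' \<star> g) n"
  unfolding dconv_def using assms dvd_pos by (intro sum.cong) auto

lemma dconv_cong_right: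
  assumes "n > 0" "\<And>m. m > 0 \<Longrightarrow> g m = g' m"
  shows "(f \<star> g) n = (f \<star> g') n"
  unfolding dconv_def using assms dvd_pos by (intro sum.cong) auto

lemma dconv_eps:
  assumes "n > 0" shows "(f \<star> eps) n = f n"
proof -
  have "(f \<star> eps) n = (\<Sum>d\<in>{d. d dvd n}. if d = n then f d else 0)"
    unfolding dconv_def eps_def
    using assms by (intro sum.cong) (auto simp: dvd_div_eq_mult)
  also have "\<dots> = f n" using assms fin_div by simp
  finally show ?thesis .
qed

lemma eps_dconv: "n > 0 \<Longrightarrow> (eps \<star> f) n = f n"
  using dconv_comm dconv_eps by metis

lemma dconv_lin_right:
  "(f \<star> (\<lambda>m. a * g m + b * h m)) n = a * (f \<star> g) n + b * (f \<star> h) n"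
  unfolding dconv_def by (simp add: sum.distrib sum_distrib_left algebra_simps)

lemma dconv_lin_left:
  "((\<lambda>m. a * g m + b * h m) \<star> f) n = a * (g \<star> f) n + b * (h \<star> f) n"
  unfolding dconv_def by (simp add: sum.distrib sum_distrib_left algebra_simps)

lemma dvd_div_div:
  assumes "d dvd (n::nat)" "e dvd d" "e > 0"
  shows "d div e dvd n div e"
proof -
  obtain a where a: "d = e * a" using assms by blast
  obtain b where b: "n = d * b" using assms by blast
  have "d div e = a" "n div e = a * b" using a b assms by auto
  then show ?thesis by simp
qed

lemma mult_dvd_of:
  assumes "a dvd (n::nat)" "b dvd n div a"
  shows "a * b dvd n"
proof -
  obtain k where k: "n = a * k" using assms by blast
  obtain j where j: "n div a = b * j" using assms by blast
  show ?thesis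
  proof (cases "a = 0")
    case True then show ?thesis using k by simp
  next
    case False
    then have "k = b * j" using k j by simp
    then show ?thesis using k by (simp add: mult.assoc)
  qed
qed

lemma dconv_assoc:
  assumes "n > 0" shows "((f \<star> g) \<star> h) n = (f \<star> (g \<star> h)) n"
proof -
  let ?S1 = "Sigma {d. d dvd n} (\<lambda>d. {e. e dvd d})"
  let ?S2 = "Sigma {a. a dvd n} (\<lambda>a. {b. b dvd n div a})"
  have fin: "finite {d. d dvd m}" if "m dvd n" for m
    using assms that dvd_pos fin_div by blast
  have fin2: "finite {b. b dvd n div a}" if "a dvd n" for a
    using assms that dvd_pos fin_div by blast
  have "((f \<star> g) \<star> h) n = (\<Sum>d\<in>{d. d dvd n}. \<Sum>e\<in>{e. e dvd d}. f e * g (d div e) * h (n div d))"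
    unfolding dconv_def by (simp add: sum_distrib_right)
  also have "\<dots> = (\<Sum>(d,e)\<in>?S1. f e * g (d div e) * h (n div d))"
    by (rule sum.Sigma) (use fin fin_div assms in auto)
  also have "\<dots> = (\<Sum>(a,b)\<in>?S2. f a * g b * h (n div a div b))"
  proof (rule sum.reindex_bij_witness[where i="\<lambda>(a,b). (a*b, a)" and j="\<lambda>(d,e). (e, d div e)"])
    fix p assume p: "p \<in> ?S1"
    obtain d e where de: "p = (d, e)" "d dvd n" "e dvd d" using p by auto
    have "e > 0" using de assms dvd_pos dvd_trans by blast
    then have "d div e dvd n div e" using de dvd_div_div by blast
    moreover have "e dvd n" using de dvd_trans by blast
    moreover have "e * (d div e) = d" using de by simp
    moreover have "n div e div (d div e) = n div d"
    proof -
      have "n div d = n div (e * (d div e))" using \<open>e * (d div e) = d\<close> by simp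
      also have "\<dots> = n div e div (d div e)" by (rule div_mult2_eq)
      finally show ?thesis by simp
    qed
    ultimately show "(case case p of (d, e) \<Rightarrow> (e, d div e) of (a, b) \<Rightarrow> (a * b, a)) = p"
      "(case p of (d, e) \<Rightarrow> (e, d div e)) \<in> ?S2"
      "(case (case p of (d, e) \<Rightarrow> (e, d div e)) of (a, b) \<Rightarrow> f a * g b * h (n div a div b)) =
          (case p of (d, e) \<Rightarrow> f e * g (d div e) * h (n div d))"
      using de by simp_all
  next
    fix p assume p: "p \<in> ?S2"
    obtain a b where ab: "p = (a, b)" "a dvd n" "b dvd n div a" using p by auto
    have "a > 0" using ab assms dvd_pos by blast
    then have "a * b div a = b" by simp
    moreover have "a * b dvd n" using ab mult_dvd_of by blast
    ultimately show "(case case p of (a, b) \<Rightarrow> (a * b, a) of (d, e) \<Rightarrow> (e, d div e)) = p"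
      "(case p of (a, b) \<Rightarrow> (a * b, a)) \<in> ?S1"
      using ab by simp_all
  qed
  also have "\<dots> = (\<Sum>a\<in>{a. a dvd n}. \<Sum>b\<in>{b. b dvd n div a}. f a * g b * h (n div a div b))"
    by (rule sum.Sigma[symmetric]) (use fin2 fin_div assms in auto)
  also have "\<dots> = (f \<star> (g \<star> h)) n"
    unfolding dconv_def by (simp add: sum_distrib_left mult.assoc)
  finally show ?thesis .
qed

lemma sum_div_split:
  assumes "(n::nat) > 0"
  shows "(\<Sum>d\<in>{d. d dvd n}. f d) = f n + (\<Sum>d\<in>{d. d dvd n \<and> d < n}. f d)"
proof -
  have "{d. d dvd n} = insert n {d. d dvd n \<and> d < n}"
    using assms by (auto dest: dvd_imp_le simp: order_le_less)
  moreover have "finite {d. d dvd n \<and> d < n}" by simp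
  ultimately show ?thesis by simp
qed

lemma dconv_one: "(f \<star> one) n = (\<Sum>d\<in>{d. d dvd n}. f d)"
  unfolding dconv_def one_def by simp

lemma Kc_rec: "n > 0 \<Longrightarrow> Kc n = eps n + (\<Sum>d\<in>{d. d dvd n \<and> d < n}. Kc d)"
  unfolding Kc_def eps_def by (subst K.simps) simp

lemma kappa_rec: "n > 0 \<Longrightarrow> kappa x n = id_pow x n + (\<Sum>d\<in>{d. d dvd n \<and> d < n}. kappa x d)"
  unfolding id_pow_def by (subst kappa.simps) simp

lemma Kc_one: "n > 0 \<Longrightarrow> (Kc \<star> one) n = 2 * Kc n - eps n"
  using Kc_rec[of n] sum_div_split[of n Kc] dconv_one[of Kc n] by simp

lemma one_Kc: "n > 0 \<Longrightarrow> (one \<star> Kc) n = 2 * Kc n - eps n"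
  using Kc_one dconv_comm by metis

lemma kappa_one: "n > 0 \<Longrightarrow> (kappa x \<star> one) n = 2 * kappa x n - id_pow x n"
  using kappa_rec[of n x] sum_div_split[of n "kappa x"] dconv_one[of "kappa x" n] by simp

definition L :: "nat \<Rightarrow> complex" where "L n = 2 * eps n - one n"

lemma dconv_L: "(f \<star> L) n = 2 * (f \<star> eps) n - (f \<star> one) n"
  using dconv_lin_right[of f 2 eps "-1" one n] unfolding L_def by simp

lemma Kc_L: "n > 0 \<Longrightarrow> (Kc \<star> L) n = eps n"
  using dconv_L[of Kc n] dconv_eps[of n Kc] Kc_one[of n] by simp

lemma kappa_L: "n > 0 \<Longrightarrow> (kappa x \<star> L) n = id_pow x n"
  using dconv_L[of "kappa x" n] dconv_eps[of n "kappa x"] kappa_one[of n x] by simp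

lemma kappa_conv: "n > 0 \<Longrightarrow> kappa x n = (id_pow x \<star> Kc) n"
proof -
  assume n: "n > 0"
  have "kappa x n = (kappa x \<star> eps) n" using dconv_eps[OF n] by simp
  also have "\<dots> = (kappa x \<star> (L \<star> Kc)) n"
    using n Kc_L dconv_comm by (intro dconv_cong_right) metis+
  also have "\<dots> = ((kappa x \<star> L) \<star> Kc) n" using dconv_assoc[OF n] by simp
  also have "\<dots> = (id_pow x \<star> Kc) n"
    using n kappa_L by (intro dconv_cong_left) auto
  finally show ?thesis .
qed

abbreviation P :: "nat \<Rightarrow> nat \<Rightarrow> complex" where "P \<equiv> dconv_pow one"

lemma Nats_real: "(z::complex) \<in> \<nat> \<Longrightarrow> z = complex_of_real (Re z) \<and> Re z \<ge> 0"
  by (auto elim!: Nats_cases)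

lemma Nats_sum': "(\<And>x. x \<in> A \<Longrightarrow> f x \<in> \<nat>) \<Longrightarrow> sum f A \<in> (\<nat> :: complex set)"
  by (induction A rule: infinite_finite_induct) auto

lemma dconv_Nats: "(\<And>m. f m \<in> \<nat>) \<Longrightarrow> (\<And>m. g m \<in> \<nat>) \<Longrightarrow> (f \<star> g) n \<in> \<nat>"
  unfolding dconv_def by (intro Nats_sum' Nats_mult) auto

lemma P_Nats: "P k m \<in> \<nat>"
proof (induction k arbitrary: m)
  case 0 then show ?case by (simp add: eps_def)
next
  case (Suc k) then show ?case by (simp add: dconv_Nats one_def)
qed

lemma K_nonneg: "K n \<ge> 0"
proof (induction n rule: less_induct)
  case (less n)
  then show ?case by (subst K.simps) (auto intro!: sum_nonneg)
qed

lemma Kc_Nats: "Kc m \<in> \<nat>"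
proof -
  have "Kc m = of_nat (nat (K m))" unfolding Kc_def using K_nonneg[of m] by simp
  then show ?thesis by simp
qed

lemma P_step: "n > 0 \<Longrightarrow> 2 * (Kc \<star> P N) n = P N n + (Kc \<star> P (Suc N)) n"
proof -
  assume n: "n > 0"
  have "(Kc \<star> P (Suc N)) n = (Kc \<star> (one \<star> P N)) n" by simp
  also have "\<dots> = ((Kc \<star> one) \<star> P N) n" using dconv_assoc[OF n] by simp
  also have "\<dots> = ((\<lambda>m. 2 * Kc m + (-1) * eps m) \<star> P N) n"
    using n Kc_one by (intro dconv_cong_left) auto
  also have "\<dots> = 2 * (Kc \<star> P N) n - (eps \<star> P N) n"
    using dconv_lin_left[of 2 Kc "-1" eps "P N" n] by simp
  also have "\<dots> = 2 * (Kc \<star> P N) n - P N n" using eps_dconv[OF n] by simp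
  finally show ?thesis by simp
qed

lemma partial: "n > 0 \<Longrightarrow> Kc n = (\<Sum>k<N. P k n / 2 ^ (k + 1)) + (Kc \<star> P N) n / 2 ^ N"
proof (induction N)
  case 0 then show ?case using dconv_eps[of n Kc] by simp
next
  case (Suc N)
  have "(Kc \<star> P N) n / 2 ^ N = P N n / 2 ^ (N + 1) + (Kc \<star> P (Suc N)) n / 2 ^ Suc N"
    using P_step[OF Suc.prems, of N] by (simp add: field_simps)
  then show ?case using Suc by simp
qed

lemma term_lim: assumes m: "m > 0" shows "(\<lambda>N. P N m / 2 ^ N) \<longlonglongrightarrow> 0"
proof -
  define c where "c k = Re (P k m)" for k
  define r where "r N = Re ((Kc \<star> P N) m)" for N
  have cP: "P k m = of_real (c k)" "c k \<ge> 0" for k unfolding c_def using Nats_real[OF P_Nats] by auto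
  have rP: "(Kc \<star> P N) m = of_real (r N)" "r N \<ge> 0" for N unfolding r_def
    using Nats_real[OF dconv_Nats[OF Kc_Nats P_Nats]] by auto
  have KP: "Kc m = of_real (Re (Kc m))" using Nats_real[OF Kc_Nats] by auto
  have eq: "Re (Kc m) = (\<Sum>k<N. c k / 2 ^ (k + 1)) + r N / 2 ^ N" for N
  proof -
    have "complex_of_real (Re (Kc m)) = complex_of_real ((\<Sum>k<N. c k / 2 ^ (k + 1)) + r N / 2 ^ N)"
      using partial[OF m, of N] KP cP rP by simp
    then show ?thesis using of_real_eq_iff by blast
  qed
  have "summable (\<lambda>k. c k / 2 ^ (k + 1))"
  proof (rule summableI_nonneg_bounded[where x="Re (Kc m)"])
    show "0 \<le> c k / 2 ^ (k + 1)" for k using cP by simp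
    show "(\<Sum>k<N. c k / 2 ^ (k + 1)) \<le> Re (Kc m)" for N using eq[of N] rP(2)[of N] by simp
  qed
  then have "(\<lambda>k. c k / 2 ^ (k + 1)) \<longlonglongrightarrow> 0" by (rule summable_LIMSEQ_zero)
  then have "(\<lambda>k. 2 * (c k / 2 ^ (k + 1))) \<longlonglongrightarrow> 2 * 0" by (intro tendsto_mult tendsto_const)
  then have "(\<lambda>k. c k / 2 ^ k) \<longlonglongrightarrow> 0" by simp
  then have "(\<lambda>k. complex_of_real (c k / 2 ^ k)) \<longlonglongrightarrow> of_real 0" by (rule tendsto_of_real)
  then show ?thesis using cP by simp
qed

lemma series: assumes n: "n > 0" shows "(\<lambda>k. P k n / 2 ^ (k + 1)) sums Kc n"
proof -
  have R: "(Kc \<star> P N) n / 2 ^ N = (\<Sum>d\<in>{d. d dvd n}. Kc d * (P N (n div d) / 2 ^ N))" for N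
    unfolding dconv_def by (simp add: sum_divide_distrib)
  have "(\<lambda>N. \<Sum>d\<in>{d. d dvd n}. Kc d * (P N (n div d) / 2 ^ N)) \<longlonglongrightarrow> (\<Sum>d\<in>{d. d dvd n}. Kc d * 0)"
    using n dvd_pos by (intro tendsto_sum tendsto_mult tendsto_const term_lim) auto
  then have "(\<lambda>N. (Kc \<star> P N) n / 2 ^ N) \<longlonglongrightarrow> 0" unfolding R by simp
  then have "(\<lambda>N. Kc n - (Kc \<star> P N) n / 2 ^ N) \<longlonglongrightarrow> Kc n - 0" by (intro tendsto_diff tendsto_const)
  moreover have "Kc n - (Kc \<star> P N) n / 2 ^ N = (\<Sum>k<N. P k n / 2 ^ (k + 1))" for N
    using partial[OF n, of N] by simp
  ultimately show ?thesis unfolding sums_def by simp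
qed

theorem theorem3:
  shows "(\<forall>n>0. kappa 0 n = (one \<star> Kc) n)
    \<and> (\<forall>n>0. Kc n = (eps n + (one \<star> Kc) n) / 2)
    \<and> (\<forall>n>0. (\<lambda>k. dconv_pow one k n / 2 ^ (k + 1)) sums Kc n)
    \<and> (\<forall>x. \<forall>n>0. kappa x n = (id_pow x \<star> Kc) n)
    \<and> is_dinverse Kc (\<lambda>n. 2 * eps n - one n)"
proof (intro conjI allI impI)
  fix n :: nat assume n: "n > 0"
  have "kappa 0 n = (id_pow 0 \<star> Kc) n" using kappa_conv[OF n] .
  also have "\<dots> = (one \<star> Kc) n"
    using n by (intro dconv_cong_left) (auto simp: id_pow_def one_def)
  finally show "kappa 0 n = (one \<star> Kc) n" .
next
  fix n :: nat assume n: "n > 0"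
  show "Kc n = (eps n + (one \<star> Kc) n) / 2" using one_Kc[OF n] by simp
next
  fix n :: nat assume n: "n > 0"
  show "(\<lambda>k. dconv_pow one k n / 2 ^ (k + 1)) sums Kc n" using series[OF n] .
next
  fix x n assume n: "(n::nat) > 0"
  show "kappa x n = (id_pow x \<star> Kc) n" using kappa_conv[OF n] .
next
  show "is_dinverse Kc (\<lambda>n. 2 * eps n - one n)"
    unfolding is_dinverse_def using Kc_L unfolding L_def by blast
qed

end
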